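(* Let $n\ge 3$ be an integer. (1) If $n=3$ or $n=4$, then $l_0^{(n-1)^3}(n^3)>\frac{(n!)^{2n}}{n^{n^2}}$. (2) If $n\ge 5$, then $l_0^{(n-1)^3}(n^3)<\frac{(n!)^{2n}}{n^{n^2}}$.
   Context: For a positive integer $d$ and integer $m$, define $$u_0^d(m)=\binom{m-\lfloor \frac{d}{2}\rfloor -1}{\lfloor \frac{d-1}{2}\rfloor}+\binom{m-\lfloor \frac{d-1}{2}\rfloor -1}{\lfloor \frac{d}{2}\rfloor},$$ where $\binom{a}{b}=0$ when $a<b$; and for a number $x$, $l_0^d(x)=k$ if and only if $k$ is the integer with $u_0^d(k-1)<x\le u_0^d(k)$. *)

theory Defs
  imports Complex_Main
begin

text \<open>Binomial coefficient on integers with the convention binom a b = 0 when a < b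
  (here b is always nonnegative).\<close>
definition binom0 :: "int \<Rightarrow> int \<Rightarrow> int" where
  "binom0 a b = (if a < b then 0 else int (nat a choose nat b))"

definition u0 :: "nat \<Rightarrow> int \<Rightarrow> int" where
  "u0 d m = binom0 (m - int (d div 2) - 1) (int ((d - 1) div 2))
          + binom0 (m - int ((d - 1) div 2) - 1) (int (d div 2))"

definition l0 :: "nat \<Rightarrow> real \<Rightarrow> int" where
  "l0 d x = (THE k::int. real_of_int (u0 d (k - 1)) < x \<and> x \<le> real_of_int (u0 d k))"

end

theory Submission
  imports Defs
begin

lemma binom0_mono:
  assumes "a \<le> a'" "0 \<le> b"
  shows "binom0 a b \<le> binom0 a' b"
proof (cases "a < b")
  case True then show ?thesis by (simp add: binom0_def)
next
  case False
  then have "nat a choose nat b \<le> nat a' choose nat b"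
    using assms by (intro binomial_right_mono) auto
  then show ?thesis using False assms by (simp add: binom0_def)
qed

lemma u0_mono:
  assumes "m \<le> m'"
  shows "u0 d m \<le> u0 d m'"
  unfolding u0_def using assms
  by (intro add_mono binom0_mono) auto

lemma l0_eq:
  assumes "real_of_int (u0 d (k - 1)) < x" "x \<le> real_of_int (u0 d k)"
  shows "l0 d x = k"
  unfolding l0_def
proof (rule the_equality)
  show "real_of_int (u0 d (k - 1)) < x \<and> x \<le> real_of_int (u0 d k)" using assms by auto
next
  fix k' assume h: "real_of_int (u0 d (k' - 1)) < x \<and> x \<le> real_of_int (u0 d k')"
  show "k' = k"
  proof (rule ccontr)
    assume "k' \<noteq> k"
    then consider "k' \<le> k - 1" | "k \<le> k' - 1" by linarith
    then show False
    proof cases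
      case 1
      then have "u0 d k' \<le> u0 d (k - 1)" by (rule u0_mono)
      then show False using h assms by linarith
    next
      case 2
      then have "u0 d k \<le> u0 d (k' - 1)" by (rule u0_mono)
      then show False using h assms by linarith
    qed
  qed
qed

lemma u0_d1:
  assumes "d \<ge> 1"
  shows "u0 d (int d + 1) = int d + 1"
proof -
  have ab: "d div 2 + (d - 1) div 2 = d - 1" using assms by presburger
  have e1: "int d + 1 - int (d div 2) - 1 = int ((d - 1) div 2 + 1)" using ab assms by linarith
  have e2: "int d + 1 - int ((d - 1) div 2) - 1 = int (d div 2 + 1)" using ab assms by linarith
  have "u0 d (int d + 1) = int (Suc ((d - 1) div 2)) + int (Suc (d div 2))"
    unfolding u0_def e1 e2 binom0_def nat_int by simp
  also have "\<dots> = int d + 1" using ab assms by simp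
  finally show ?thesis .
qed

lemma u0_d2:
  assumes "d \<ge> 1"
  shows "u0 d (int d + 2) \<ge> int ((d div 2 + 2) * (d div 2 + 1) div 2)"
proof -
  have ab: "d div 2 + (d - 1) div 2 = d - 1" using assms by presburger
  have e2: "int d + 2 - int ((d - 1) div 2) - 1 = int (d div 2 + 2)" using ab assms by linarith
  have "binom0 (int d + 2 - int ((d - 1) div 2) - 1) (int (d div 2))
      = int ((d div 2 + 2) choose (d div 2))"
    unfolding e2 binom0_def nat_int by simp
  also have "(d div 2 + 2) choose (d div 2) = (d div 2 + 2) choose 2"
    by (subst binomial_symmetric) auto
  also have "\<dots> = (d div 2 + 2) * (d div 2 + 1) div 2" by (simp add: choose_two)
  finally have b: "binom0 (int d + 2 - int ((d - 1) div 2) - 1) (int (d div 2))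
      = int ((d div 2 + 2) * (d div 2 + 1) div 2)" .
  have "0 \<le> binom0 (int d + 2 - int (d div 2) - 1) (int ((d - 1) div 2))"
    by (simp add: binom0_def)
  then show ?thesis unfolding u0_def b by linarith
qed

lemma pow_succ_le: "real (n + 1) ^ n \<le> 3 * real n ^ n"
proof (cases "n = 0")
  case True then show ?thesis by simp
next
  case False
  then have np: "real n > 0" by simp
  have "(1 + 1 / real n) ^ n \<le> exp (1 / real n) ^ n"
    by (rule power_mono) (auto simp del: exp_ge_add_one_self intro: exp_ge_add_one_self)
  also have "\<dots> = exp (real n * (1 / real n))" by (rule exp_of_nat_mult[symmetric])
  also have "\<dots> = exp 1" using np by simp
  also have "\<dots> \<le> 3" by (rule exp_le)
  finally have h: "(1 + 1 / real n) ^ n \<le> 3" .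
  have "real (n + 1) ^ n = (1 + 1 / real n) ^ n * real n ^ n"
    using np by (simp add: power_mult_distrib[symmetric] field_simps)
  also have "\<dots> \<le> 3 * real n ^ n"
    using h by (intro mult_right_mono) auto
  finally show ?thesis .
qed

lemma pow_succ_le_nat: "(n + 1) ^ n \<le> 3 * n ^ n"
proof -
  have "real ((n + 1) ^ n) \<le> real (3 * n ^ n)" using pow_succ_le[of n] by simp
  then show ?thesis by linarith
qed

lemma fact_sq: "n \<ge> 5 \<Longrightarrow> 4 * n ^ n \<le> (fact n :: nat) ^ 2"
proof (induction n rule: nat_induct_at_least)
  case base
  then show ?case by code_simp
next
  case (Suc n)
  have "3 * n ^ n \<le> (n + 1) * n ^ n" using Suc.hyps by (intro mult_le_mono1) simp
  then have a: "(n + 1) ^ n \<le> (n + 1) * n ^ n"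
    using pow_succ_le_nat[of n] by linarith
  have "4 * Suc n ^ Suc n = 4 * (n + 1) * (n + 1) ^ n" by (simp add: algebra_simps)
  also have "\<dots> \<le> 4 * (n + 1) * ((n + 1) * n ^ n)" using a by simp
  also have "\<dots> = (n + 1) ^ 2 * (4 * n ^ n)" by (simp add: power2_eq_square algebra_simps)
  also have "\<dots> \<le> (n + 1) ^ 2 * (fact n) ^ 2" using Suc.IH by simp
  also have "\<dots> = (fact (Suc n)) ^ 2" by (metis fact_Suc of_nat_id power_mult_distrib Suc_eq_plus1)
  finally show ?case .
qed

lemma cube_aux: "(m::nat) \<ge> 4 \<Longrightarrow> (m + 1) ^ 3 \<le> 4 * m ^ 3 + 6"
proof -
  assume m: "m \<ge> 4"
  have "(m + 1) ^ 3 = m^3 + 3*m^2 + 3*m + 1" by (simp add: power3_eq_cube power2_eq_square algebra_simps)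
  moreover have "3*m^2 \<le> m^3" using m by (simp add: power3_eq_cube power2_eq_square)
  moreover have "3*m + 1 \<le> m^3"
  proof -
    have "16 \<le> m * m" using mult_le_mono[OF m m] by simp
    then have "16 * m \<le> m * m * m" by (rule mult_le_mono1)
    then show ?thesis using m unfolding power3_eq_cube by linarith
  qed
  ultimately show ?thesis by linarith
qed

lemma four_pow: "n \<ge> 5 \<Longrightarrow> (n - 1) ^ 3 + 2 < (4::nat) ^ n"
proof (induction n rule: nat_induct_at_least)
  case base then show ?case by simp
next
  case (Suc n)
  have "Suc n - 1 = (n - 1) + 1" using Suc.hyps by simp
  then have "(Suc n - 1) ^ 3 \<le> 4 * (n - 1) ^ 3 + 6"
    using cube_aux[of "n - 1"] Suc.hyps by simp
  then show ?case using Suc.IH by simp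
qed

lemma main_ineq:
  assumes "n \<ge> 5"
  shows "((n - 1) ^ 3 + 2) * n ^ (n ^ 2) < (fact n :: nat) ^ (2 * n)"
proof -
  have "((n - 1) ^ 3 + 2) * n ^ (n ^ 2) < 4 ^ n * n ^ (n ^ 2)"
    using four_pow[OF assms] assms by (intro mult_strict_right_mono) simp_all
  also have "\<dots> = (4 * n ^ n) ^ n"
    by (simp add: power_mult_distrib power_mult power2_eq_square)
  also have "\<dots> \<le> ((fact n) ^ 2) ^ n"
    using fact_sq[OF assms] by (rule power_mono) simp
  also have "\<dots> = fact n ^ (2 * n)" by (simp add: power_mult)
  finally show ?thesis .
qed

lemma big_u0:
  assumes "n \<ge> 5"
  shows "int (n ^ 3) \<le> u0 ((n - 1) ^ 3) (int ((n - 1) ^ 3) + 2)"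
proof -
  define m where "m = n - 1"
  have m4: "m \<ge> 4" and nm: "n = m + 1" using assms unfolding m_def by auto
  define d where "d = m ^ 3"
  have d64: "d \<ge> 64" unfolding d_def using power_mono[OF m4, of 3] by simp
  define a where "a = d div 2"
  have a2: "d \<le> 2 * a + 1" unfolding a_def by presburger
  have "(m + 1) ^ 3 \<le> (2 * m) ^ 3" using m4 by (intro power_mono) auto
  also have "\<dots> = 8 * m ^ 3" by (simp add: power_mult_distrib)
  finally have c1: "(m + 1) ^ 3 * 8 \<le> 64 * d" unfolding d_def by simp
  have "64 * d \<le> d * d" using d64 by simp
  also have "d * d \<le> (2 * a + 2) * (2 * a + 2)" using a2 by (intro mult_le_mono) auto
  also have "\<dots> = 4 * ((a + 1) * (a + 1))" by (simp add: algebra_simps)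
  also have "\<dots> \<le> 4 * ((a + 2) * (a + 1))" by simp
  finally have "n ^ 3 * 2 \<le> (a + 2) * (a + 1)" using c1 nm by simp
  then have "n ^ 3 * 2 div 2 \<le> (a + 2) * (a + 1) div 2" by (rule div_le_mono)
  then have "n ^ 3 \<le> (a + 2) * (a + 1) div 2" by simp
  then have "int (n ^ 3) \<le> int ((a + 2) * (a + 1) div 2)" by linarith
  also have "\<dots> \<le> u0 d (int d + 2)" unfolding a_def using u0_d2[of d] d64 by simp
  finally show ?thesis unfolding d_def m_def .
qed

theorem proposition8:
  fixes n :: nat
  assumes "n \<ge> 3"
  shows "((n = 3 \<or> n = 4) \<longrightarrow>
            real_of_int (l0 ((n - 1) ^ 3) (real (n ^ 3)))
              > real (fact n) ^ (2 * n) / real n ^ (n ^ 2))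
       \<and> (n \<ge> 5 \<longrightarrow>
            real_of_int (l0 ((n - 1) ^ 3) (real (n ^ 3)))
              < real (fact n) ^ (2 * n) / real n ^ (n ^ 2))"
proof (intro conjI impI)
  assume "n = 3 \<or> n = 4"
  then show "real_of_int (l0 ((n - 1) ^ 3) (real (n ^ 3)))
              > real (fact n) ^ (2 * n) / real n ^ (n ^ 2)"
  proof
    assume n: "n = 3"
    have h1: "u0 8 10 = 25" by (simp add: u0_def binom0_def; code_simp)
    have h2: "u0 8 11 = 55" by (simp add: u0_def binom0_def; code_simp)
    have "l0 8 27 = 11" by (rule l0_eq) (simp_all add: h1 h2)
    moreover have "real (fact 3) ^ 6 / real 3 ^ 9 < 11" by (simp add: fact_numeral)
    ultimately show ?thesis using n by simp
  next
    assume n: "n = 4"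
    have h1: "u0 27 28 = 28" by (simp add: u0_def binom0_def; code_simp)
    have h2: "u0 27 29 = 210" by (simp add: u0_def binom0_def; code_simp)
    have "l0 27 64 = 29" by (rule l0_eq) (simp_all add: h1 h2)
    moreover have "real (fact 4) ^ 8 / real 4 ^ 16 < 29" by (simp add: fact_numeral)
    ultimately show ?thesis using n by simp
  qed
next
  assume n5: "n \<ge> 5"
  define d where "d = (n - 1) ^ 3"
  have d1: "d \<ge> 1" unfolding d_def using n5 by simp
  have lt: "d + 1 < n ^ 3" unfolding d_def using n5
  proof -
    have "(n - 1) ^ 3 < n ^ 3" using n5 by (intro power_strict_mono) auto
    moreover have "(n - 1) ^ 3 + 1 \<noteq> n ^ 3"
    proof
      assume h: "(n - 1) ^ 3 + 1 = n ^ 3"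
      define m where "m = n - 1"
      have nm: "n = m + 1" "m \<ge> 4" using n5 unfolding m_def by auto
      have "(m + 1) ^ 3 = m ^ 3 + 3 * m ^ 2 + 3 * m + 1"
        by (simp add: power3_eq_cube power2_eq_square algebra_simps)
      then show False using h nm by simp
    qed
    ultimately show "(n - 1) ^ 3 + 1 < n ^ 3" by linarith
  qed
  have "l0 d (real (n ^ 3)) = int d + 2"
  proof (rule l0_eq)
    have e: "int d + 2 - 1 = int d + 1" by simp
    have "real (d + 1) < real (n ^ 3)" using lt by (simp only: of_nat_less_iff)
    then show "real_of_int (u0 d (int d + 2 - 1)) < real (n ^ 3)"
      unfolding e u0_d1[OF d1] by simp
    show "real (n ^ 3) \<le> real_of_int (u0 d (int d + 2))"
      using big_u0[OF n5] unfolding d_def by linarith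
  qed
  moreover have "real (d + 2) < real (fact n) ^ (2 * n) / real n ^ (n ^ 2)"
  proof -
    have "real ((d + 2) * n ^ (n ^ 2)) < real ((fact n :: nat) ^ (2 * n))"
      using main_ineq[OF n5] unfolding d_def by linarith
    then have "real (d + 2) * real n ^ (n ^ 2) < real (fact n) ^ (2 * n)" by (simp add: algebra_simps)
    moreover have "real n ^ (n ^ 2) > 0" using n5 by simp
    ultimately show ?thesis by (simp add: pos_less_divide_eq)
  qed
  ultimately show "real_of_int (l0 ((n - 1) ^ 3) (real (n ^ 3)))
              < real (fact n) ^ (2 * n) / real n ^ (n ^ 2)" unfolding d_def by simp
qed

end
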